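(* Let $V$ be a set of truth values containing distinct elements $1$ and $0$, equipped with a partial order $\leq$ (reflexive, transitive, antisymmetric) such that $0\leq x\leq 1$ for all $x\in V$. Define the order-theoretic truth-relation $\models_{\leq}\subseteq\mathcal{P}(V)\times\mathcal{P}(V)$ by: $\gamma\models_{\leq}\delta$ iff ($\exists x\in\gamma,\exists y\in\delta: x\leq y$) or $0\in\gamma$ or $1\in\delta$. Then $\models_{\leq}$ equals the intersection of all pure consequence relations $\models_{\mathcal{D},\mathcal{D}}$, where $\mathcal{D}$ ranges over the sets of designated values that are upsets for $\leq$.
   Context: A set of designated values is a subset $\mathcal{D}\subseteq V$ with $1\in\mathcal{D}$ and $0\notin\mathcal{D}$. For sets of designated values $\mathcal{D}_p,\mathcal{D}_c$, the mixed consequence truth-relation $\models_{\mathcal{D}_p,\mathcal{D}_c}$ on $\mathcal{P}(V)\times\mathcal{P}(V)$ is defined by $\gamma\models_{\mathcal{D}_p,\mathcal{D}_c}\delta$ iff ($\gamma\subseteq\mathcal{D}_p$ implies $\delta\cap\mathcal{D}_c\neq\emptyset$); it is pure when $\mathcal{D}_p=\mathcal{D}_c$. A set $U\subseteq V$ is an upset for $\leq$ if $x\in U$ and $x\leq y$ imply $y\in U$. *)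

theory Defs
  imports Main
begin

definition designated :: "'v \<Rightarrow> 'v \<Rightarrow> 'v set \<Rightarrow> bool" where
  "designated one zero D \<longleftrightarrow> one \<in> D \<and> zero \<notin> D"

definition upset :: "('v \<Rightarrow> 'v \<Rightarrow> bool) \<Rightarrow> 'v set \<Rightarrow> bool" where
  "upset le U \<longleftrightarrow> (\<forall>x y. x \<in> U \<longrightarrow> le x y \<longrightarrow> y \<in> U)"

definition mixed_cons :: "'v set \<Rightarrow> 'v set \<Rightarrow> 'v set \<Rightarrow> 'v set \<Rightarrow> bool" where
  "mixed_cons Dp Dc \<gamma> \<delta> \<longleftrightarrow> (\<gamma> \<subseteq> Dp \<longrightarrow> \<delta> \<inter> Dc \<noteq> {})"

definition order_cons :: "('v \<Rightarrow> 'v \<Rightarrow> bool) \<Rightarrow> 'v \<Rightarrow> 'v \<Rightarrow> 'v set \<Rightarrow> 'v set \<Rightarrow> bool" where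
  "order_cons le zero one \<gamma> \<delta> \<longleftrightarrow>
     (\<exists>x\<in>\<gamma>. \<exists>y\<in>\<delta>. le x y) \<or> zero \<in> \<gamma> \<or> one \<in> \<delta>"

end

theory Submission
  imports Defs
begin

theorem theorem2p14:
  fixes le :: "'v \<Rightarrow> 'v \<Rightarrow> bool" and zero one :: 'v
  assumes "one \<noteq> zero"
    and refl: "\<And>x. le x x"
    and trans: "\<And>x y z. le x y \<Longrightarrow> le y z \<Longrightarrow> le x z"
    and antisym: "\<And>x y. le x y \<Longrightarrow> le y x \<Longrightarrow> x = y"
    and bounds: "\<And>x. le zero x \<and> le x one"
  shows "{(\<gamma>, \<delta>). order_cons le zero one \<gamma> \<delta>} =
         \<Inter> {{(\<gamma>, \<delta>). mixed_cons D D \<gamma> \<delta>} | D. designated one zero D \<and> upset le D}"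
proof (rule set_eqI, rule iffI)
  fix p assume "p \<in> {(\<gamma>, \<delta>). order_cons le zero one \<gamma> \<delta>}"
  then obtain g d where p: "p = (g, d)" and oc: "order_cons le zero one g d" by auto
  show "p \<in> \<Inter> {{(\<gamma>, \<delta>). mixed_cons D D \<gamma> \<delta>} | D. designated one zero D \<and> upset le D}"
    using oc unfolding p order_cons_def mixed_cons_def designated_def upset_def by blast
next
  fix p assume H: "p \<in> \<Inter> {{(\<gamma>, \<delta>). mixed_cons D D \<gamma> \<delta>} | D. designated one zero D \<and> upset le D}"
  obtain g d where p: "p = (g, d)" by (cases p)
  show "p \<in> {(\<gamma>, \<delta>). order_cons le zero one \<gamma> \<delta>}"
  proof (rule ccontr)
    assume "p \<notin> {(\<gamma>, \<delta>). order_cons le zero one \<gamma> \<delta>}"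
    hence n: "\<not> order_cons le zero one g d" using p by auto
    define D where "D = {y. \<exists>x\<in>g. le x y} \<union> {one}"
    have des: "designated one zero D"
      using n assms(1) antisym bounds unfolding D_def designated_def order_cons_def by blast
    have up: "upset le D"
      unfolding D_def upset_def using trans antisym bounds by blast
    have "p \<in> {(\<gamma>, \<delta>). mixed_cons D D \<gamma> \<delta>}" using H des up by blast
    hence "mixed_cons D D g d" using p by auto
    moreover have "g \<subseteq> D" unfolding D_def using refl by blast
    moreover have "d \<inter> D = {}" using n unfolding D_def order_cons_def by blast
    ultimately show False unfolding mixed_cons_def by blast
  qed
qed

end
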